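(* Let $\Gamma$ be a finitely generated group equipped with the word metric associated with a finite generating set. Then $\Gamma$ has exponential growth if and only if $h_\infty(\Gamma)=\infty$ (and otherwise $h_\infty(\Gamma)=0$).
   Context: The word metric associated with a generating set $S$ is the path metric of the Cayley graph with vertex set $\Gamma$ and edges $\{\gamma,\gamma s\}$, $s\in S$. Non-decreasing functions $f,g\colon\mathbb N\to\mathbb N\cup\{\infty\}$ are equivalent if there is $D\in\mathbb N$ with $f(r)\le Dg(Dr)$ and $g(r)\le Df(Dr)$ for all $r$; $\Gamma$ has exponential growth if $r\mapsto|B(e,r)|$ is equivalent to $r\mapsto\exp(r)$. Coarse entropy $h_\infty(X)=\lim_{\delta\to\infty}\lim_{R\to\infty}\limsup_{n\to\infty}\frac1n\log s(n,R,\delta,x_0)$, where $s(n,R,\delta,x_0)$ is the supremum of cardinalities of $R$-separated sets of $\delta$-paths $(x_0,\dots,x_n)$ ($d(x_i,x_{i+1})\le\delta$) starting at $x_0$, paths compared by $\max_i d(x_i,y_i)$. *)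

theory Defs
  imports "HOL-Analysis.Analysis" "HOL-Algebra.Algebra" "HOL-Library.Liminf_Limsup"
begin

text \<open>Word metric of the Cayley graph of G w.r.t. S: vertex set carrier G,
  (undirected) edges {g, g s} with s in S. The distance is the length of a
  shortest edge path.\<close>
definition word_dist :: "('a, 'b) monoid_scheme \<Rightarrow> 'a set \<Rightarrow> 'a \<Rightarrow> 'a \<Rightarrow> nat" where
  "word_dist G S x y = (LEAST n. \<exists>f :: nat \<Rightarrow> 'a. f 0 = x \<and> f n = y \<and>
      (\<forall>i\<le>n. f i \<in> carrier G) \<and>
      (\<forall>i<n. \<exists>s\<in>S. f (Suc i) = f i \<otimes>\<^bsub>G\<^esub> s \<or> f i = f (Suc i) \<otimes>\<^bsub>G\<^esub> s))"

definition word_ball :: "('a, 'b) monoid_scheme \<Rightarrow> 'a set \<Rightarrow> nat \<Rightarrow> 'a set" where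
  "word_ball G S r = {g \<in> carrier G. word_dist G S \<one>\<^bsub>G\<^esub> g \<le> r}"

text \<open>Exponential growth: r \<mapsto> |B(e,r)| is equivalent to r \<mapsto> exp r, i.e. there
  is D \<in> \<nat> with f(r) \<le> D g(D r) and g(r) \<le> D f(D r) for all r.\<close>
definition exponential_growth :: "('a, 'b) monoid_scheme \<Rightarrow> 'a set \<Rightarrow> bool" where
  "exponential_growth G S \<longleftrightarrow> (\<exists>D::nat. \<forall>r::nat.
      real (card (word_ball G S r)) \<le> real D * exp (real (D * r)) \<and>
      exp (real r) \<le> real D * real (card (word_ball G S (D * r))))"

definition delta_paths :: "('a, 'b) monoid_scheme \<Rightarrow> 'a set \<Rightarrow> nat \<Rightarrow> real \<Rightarrow> 'a \<Rightarrow> 'a list set" where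
  "delta_paths G S n \<delta> x0 = {p. length p = Suc n \<and> set p \<subseteq> carrier G \<and> p ! 0 = x0 \<and>
      (\<forall>i<n. real (word_dist G S (p ! i) (p ! Suc i)) \<le> \<delta>)}"

definition path_separated :: "('a, 'b) monoid_scheme \<Rightarrow> 'a set \<Rightarrow> nat \<Rightarrow> real \<Rightarrow> 'a list set \<Rightarrow> bool" where
  "path_separated G S n R P \<longleftrightarrow> (\<forall>p\<in>P. \<forall>q\<in>P. p \<noteq> q \<longrightarrow>
      (\<exists>i\<le>n. R \<le> real (word_dist G S (p ! i) (q ! i))))"

definition sep_count :: "('a, 'b) monoid_scheme \<Rightarrow> 'a set \<Rightarrow> nat \<Rightarrow> real \<Rightarrow> real \<Rightarrow> 'a \<Rightarrow> ereal" where
  "sep_count G S n R \<delta> x0 = (SUP P \<in> {P. finite P \<and> P \<subseteq> delta_paths G S n \<delta> x0 \<and>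
      path_separated G S n R P}. ereal (real (card P)))"

definition eln :: "ereal \<Rightarrow> ereal" where
  "eln x = (if x = \<infinity> then \<infinity> else ereal (ln (real_of_ereal x)))"

definition coarse_entropy :: "('a, 'b) monoid_scheme \<Rightarrow> 'a set \<Rightarrow> ereal" where
  "coarse_entropy G S = Lim at_top (\<lambda>\<delta>::real. Lim at_top (\<lambda>R::real.
      limsup (\<lambda>n::nat. eln (sep_count G S n R \<delta> \<one>\<^bsub>G\<^esub>) / ereal (real n))))"

end

theory Submission
  imports Defs
begin

definition adj :: "('a, 'b) monoid_scheme \<Rightarrow> 'a set \<Rightarrow> 'a \<Rightarrow> 'a \<Rightarrow> bool" where
  "adj G S x y \<longleftrightarrow> x \<in> carrier G \<and> y \<in> carrier G \<and> (\<exists>s\<in>S. y = x \<otimes>\<^bsub>G\<^esub> s \<or> x = y \<otimes>\<^bsub>G\<^esub> s)"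

lemma path_conv:
  "(\<exists>f :: nat \<Rightarrow> 'a. f 0 = x \<and> f n = y \<and> (\<forall>i\<le>n. f i \<in> carrier G) \<and>
      (\<forall>i<n. \<exists>s\<in>S. f (Suc i) = f i \<otimes>\<^bsub>G\<^esub> s \<or> f i = f (Suc i) \<otimes>\<^bsub>G\<^esub> s))
   \<longleftrightarrow> x \<in> carrier G \<and> (adj G S ^^ n) x y"
proof
  assume "\<exists>f :: nat \<Rightarrow> 'a. f 0 = x \<and> f n = y \<and> (\<forall>i\<le>n. f i \<in> carrier G) \<and>
      (\<forall>i<n. \<exists>s\<in>S. f (Suc i) = f i \<otimes>\<^bsub>G\<^esub> s \<or> f i = f (Suc i) \<otimes>\<^bsub>G\<^esub> s)"
  then obtain f :: "nat \<Rightarrow> 'a" where f: "f 0 = x" "f n = y" "\<forall>i\<le>n. f i \<in> carrier G"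
     "\<forall>i<n. \<exists>s\<in>S. f (Suc i) = f i \<otimes>\<^bsub>G\<^esub> s \<or> f i = f (Suc i) \<otimes>\<^bsub>G\<^esub> s" by blast
  have "\<forall>i<n. adj G S (f i) (f (Suc i))" using f(3,4) unfolding adj_def by auto
  then show "x \<in> carrier G \<and> (adj G S ^^ n) x y" using f unfolding relpowp_fun_conv by auto
next
  assume a: "x \<in> carrier G \<and> (adj G S ^^ n) x y"
  then obtain f where f: "f 0 = x" "f n = y" "\<forall>i<n. adj G S (f i) (f (Suc i))"
    unfolding relpowp_fun_conv by auto
  have "\<forall>i\<le>n. f i \<in> carrier G"
  proof (intro allI impI)
    fix i assume "i \<le> n"
    then show "f i \<in> carrier G" using f a by (cases i) (auto simp: adj_def)
  qed
  then show "\<exists>f :: nat \<Rightarrow> 'a. f 0 = x \<and> f n = y \<and> (\<forall>i\<le>n. f i \<in> carrier G) \<and>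
      (\<forall>i<n. \<exists>s\<in>S. f (Suc i) = f i \<otimes>\<^bsub>G\<^esub> s \<or> f i = f (Suc i) \<otimes>\<^bsub>G\<^esub> s)"
    using f by (auto simp: adj_def)
qed

lemma word_dist_eq: "word_dist G S x y = (LEAST n. x \<in> carrier G \<and> (adj G S ^^ n) x y)"
  unfolding word_dist_def path_conv ..

definition tm :: "('a, 'b) monoid_scheme \<Rightarrow> 'a set \<Rightarrow> nat \<Rightarrow> real \<Rightarrow> real \<Rightarrow> ereal" where
  "tm G S n R \<delta> = eln (sep_count G S n R \<delta> \<one>\<^bsub>G\<^esub>) / ereal (real n)"

lemma ce_tm: "coarse_entropy G S = Lim at_top (\<lambda>\<delta>. Lim at_top (\<lambda>R. limsup (\<lambda>n. tm G S n R \<delta>)))"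
  unfolding coarse_entropy_def tm_def ..

locale wgrp = group G for G (structure) +
  fixes S
  assumes finS: "finite S" and SG: "S \<subseteq> carrier G" and gen: "generate G S = carrier G"
begin

abbreviation "A \<equiv> adj G S"
abbreviation "d \<equiv> word_dist G S"
abbreviation "B \<equiv> word_ball G S"

lemma adj_carrier: "A x y \<Longrightarrow> x \<in> carrier G \<and> y \<in> carrier G" by (simp add: adj_def)

lemma adj_sym: "A x y \<Longrightarrow> A y x" unfolding adj_def by blast

lemma pow_sym: "(A ^^ n) x y \<Longrightarrow> (A ^^ n) y x"
proof (induction n arbitrary: y)
  case 0 then show ?case by auto
next
  case (Suc n)
  then obtain z where "(A ^^ n) x z" "A z y" by (auto elim: relpowp_Suc_E)
  then show ?case using Suc.IH by (meson adj_sym relpowp_Suc_I2)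
qed

lemma adj_trans_l: "e \<in> carrier G \<Longrightarrow> A x y \<Longrightarrow> A (e \<otimes> x) (e \<otimes> y)"
proof -
  assume e: "e \<in> carrier G" and a: "A x y"
  then obtain s where s: "s \<in> S" "y = x \<otimes> s \<or> x = y \<otimes> s" and c: "x \<in> carrier G" "y \<in> carrier G"
    unfolding adj_def by auto
  have sc: "s \<in> carrier G" using s SG by auto
  have "e \<otimes> y = (e \<otimes> x) \<otimes> s \<or> e \<otimes> x = (e \<otimes> y) \<otimes> s" using s(2) e c sc by (auto simp: m_assoc)
  then show ?thesis unfolding adj_def using e c s(1) by auto
qed

lemma pow_trans_l: "e \<in> carrier G \<Longrightarrow> (A ^^ n) x y \<Longrightarrow> x \<in> carrier G \<Longrightarrow> (A ^^ n) (e \<otimes> x) (e \<otimes> y)"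
proof (induction n arbitrary: y)
  case 0 then show ?case by auto
next
  case (Suc n)
  then obtain z where "(A ^^ n) x z" "A z y" by (auto elim: relpowp_Suc_E)
  then show ?case using Suc adj_trans_l by (meson relpowp_Suc_I)
qed

lemma reach_one: "g \<in> carrier G \<Longrightarrow> \<exists>n. (A ^^ n) \<one> g"
proof -
  assume "g \<in> carrier G"
  then have "g \<in> generate G S" using gen by simp
  then show ?thesis
  proof (induction rule: generate.induct)
    case one then show ?case by (metis relpowp_0_I)
  next
    case (incl h)
    then have "A \<one> h" using SG unfolding adj_def by force
    then show ?case by (metis relpowp_1)
  next
    case (inv h)
    then have "A \<one> (inv h)" using SG unfolding adj_def by force
    then show ?case by (metis relpowp_1)
  next
    case (eng h1 h2)
    then obtain n1 n2 where a: "(A ^^ n1) \<one> h1" "(A ^^ n2) \<one> h2" by blast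
    have c: "h1 \<in> carrier G" "h2 \<in> carrier G" using eng.hyps gen by auto
    have "(A ^^ n2) (h1 \<otimes> \<one>) (h1 \<otimes> h2)" using pow_trans_l[OF c(1) a(2)] by simp
    then have "(A ^^ n2) h1 (h1 \<otimes> h2)" using c by simp
    then show ?case using a(1) relpowp_trans by metis
  qed
qed

lemma reach: "x \<in> carrier G \<Longrightarrow> y \<in> carrier G \<Longrightarrow> \<exists>n. (A ^^ n) x y"
proof -
  assume c: "x \<in> carrier G" "y \<in> carrier G"
  then obtain n where "(A ^^ n) \<one> (inv x \<otimes> y)" using reach_one by blast
  from pow_trans_l[OF c(1) this] have "(A ^^ n) (x \<otimes> \<one>) (x \<otimes> (inv x \<otimes> y))" by simp
  then show ?thesis using c by (auto simp: m_assoc[symmetric])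
qed

lemma d_reach: "x \<in> carrier G \<Longrightarrow> y \<in> carrier G \<Longrightarrow> (A ^^ d x y) x y"
  unfolding word_dist_eq using reach by (smt (verit) LeastI_ex)

lemma d_le: "x \<in> carrier G \<Longrightarrow> (A ^^ n) x y \<Longrightarrow> d x y \<le> n"
  unfolding word_dist_eq by (simp add: Least_le)

lemma pow_carrier: "(A ^^ n) x y \<Longrightarrow> x \<in> carrier G \<Longrightarrow> y \<in> carrier G"
  by (cases n) (auto elim!: relpowp_Suc_E dest: adj_carrier)

lemma d_self: "x \<in> carrier G \<Longrightarrow> d x x = 0"
  unfolding word_dist_eq by (simp add: Least_eq_0)

lemma d_sym: "x \<in> carrier G \<Longrightarrow> y \<in> carrier G \<Longrightarrow> d x y = d y x"
  by (meson antisym d_le d_reach pow_sym)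

lemma d_tri: "x \<in> carrier G \<Longrightarrow> y \<in> carrier G \<Longrightarrow> z \<in> carrier G \<Longrightarrow> d x z \<le> d x y + d y z"
  by (meson d_le d_reach relpowp_trans)

lemma d_inv: "e \<in> carrier G \<Longrightarrow> x \<in> carrier G \<Longrightarrow> y \<in> carrier G \<Longrightarrow> d (e \<otimes> x) (e \<otimes> y) = d x y"
proof (rule antisym)
  assume c: "e \<in> carrier G" "x \<in> carrier G" "y \<in> carrier G"
  show "d (e \<otimes> x) (e \<otimes> y) \<le> d x y" using c by (meson d_le d_reach m_closed pow_trans_l)
  have "(A ^^ d (e \<otimes> x) (e \<otimes> y)) (inv e \<otimes> (e \<otimes> x)) (inv e \<otimes> (e \<otimes> y))"
    using c by (meson d_reach m_closed pow_trans_l inv_closed)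
  then have "(A ^^ d (e \<otimes> x) (e \<otimes> y)) x y" using c by (simp add: m_assoc[symmetric])
  then show "d x y \<le> d (e \<otimes> x) (e \<otimes> y)" using c d_le by blast
qed

lemma d_one: "x \<in> carrier G \<Longrightarrow> y \<in> carrier G \<Longrightarrow> d \<one> (inv x \<otimes> y) = d x y"
  using d_inv[of "inv x" x y] by simp


lemma layer_finite: "finite {g. (A ^^ m) \<one> g}"
proof (induction m)
  case 0 then show ?case by simp
next
  case (Suc m)
  have "{g. (A ^^ Suc m) \<one> g} \<subseteq> (\<Union>s\<in>S. (\<lambda>g. g \<otimes> s) ` {g. (A ^^ m) \<one> g} \<union> (\<lambda>g. g \<otimes> inv s) ` {g. (A ^^ m) \<one> g})"
  proof
    fix g assume "g \<in> {g. (A ^^ Suc m) \<one> g}"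
    then obtain z where z: "(A ^^ m) \<one> z" "A z g" by (auto elim: relpowp_Suc_E)
    then obtain s where s: "s \<in> S" "g = z \<otimes> s \<or> z = g \<otimes> s" and c: "z \<in> carrier G" "g \<in> carrier G"
      unfolding adj_def by auto
    have sc: "s \<in> carrier G" using s SG by auto
    have "g = z \<otimes> s \<or> g = z \<otimes> inv s"
      using s(2) c sc by (metis inv_solve_right m_closed inv_closed)
    then show "g \<in> (\<Union>s\<in>S. (\<lambda>g. g \<otimes> s) ` {g. (A ^^ m) \<one> g} \<union> (\<lambda>g. g \<otimes> inv s) ` {g. (A ^^ m) \<one> g})"
      using z(1) s(1) by auto
  qed
  then show ?case using Suc finS by (meson finite_UN_I finite_Un finite_imageI finite_subset)
qed

lemma ball_finite: "finite (B r)"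
proof -
  have "B r \<subseteq> (\<Union>m\<le>r. {g. (A ^^ m) \<one> g})"
    unfolding word_ball_def using d_reach[OF one_closed] by fastforce
  then show ?thesis using layer_finite by (meson finite_UN_I finite_atMost finite_subset)
qed

lemma one_ball: "\<one> \<in> B r"
  unfolding word_ball_def using d_self by simp

lemma card_ball_ge1: "1 \<le> card (B r)"
  using one_ball ball_finite by (metis One_nat_def Suc_leI card_gt_0_iff empty_iff)

lemma ball_mono: "r \<le> r' \<Longrightarrow> B r \<subseteq> B r'"
  unfolding word_ball_def by auto

lemma card_ball_mono: "r \<le> r' \<Longrightarrow> card (B r) \<le> card (B r')"
  by (simp add: ball_finite ball_mono card_mono)

lemma cball_sub: "e \<in> carrier G \<Longrightarrow> {g\<in>carrier G. d e g \<le> r} \<subseteq> (\<lambda>x. e \<otimes> x) ` B r"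
proof
  fix g assume e: "e \<in> carrier G" and g: "g \<in> {g\<in>carrier G. d e g \<le> r}"
  then have "inv e \<otimes> g \<in> B r" unfolding word_ball_def using d_one by auto
  moreover have "g = e \<otimes> (inv e \<otimes> g)" using e g by (simp add: m_assoc[symmetric])
  ultimately show "g \<in> (\<lambda>x. e \<otimes> x) ` B r" by blast
qed

lemma card_cball: "e \<in> carrier G \<Longrightarrow> card {g\<in>carrier G. d e g \<le> r} \<le> card (B r)"
proof -
  assume e: "e \<in> carrier G"
  have "card {g\<in>carrier G. d e g \<le> r} \<le> card ((\<lambda>x. e \<otimes> x) ` B r)"
    using cball_sub[OF e] ball_finite by (intro card_mono) auto
  also have "\<dots> \<le> card (B r)" by (rule card_image_le[OF ball_finite])
  finally show ?thesis .
qed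

lemma finite_cball: "e \<in> carrier G \<Longrightarrow> finite {g\<in>carrier G. d e g \<le> r}"
  using cball_sub ball_finite finite_subset by blast


lemma nat_ceil_ge: "real x \<le> (\<delta>::real) \<Longrightarrow> x \<le> nat \<lceil>\<delta>\<rceil>"
  by linarith

lemma dp_carrier: "p \<in> delta_paths G S n \<delta> x0 \<Longrightarrow> i \<le> n \<Longrightarrow> p ! i \<in> carrier G"
proof -
  assume p: "p \<in> delta_paths G S n \<delta> x0" and i: "i \<le> n"
  then have "p ! i \<in> set p" unfolding delta_paths_def by (intro nth_mem) auto
  then show ?thesis using p unfolding delta_paths_def by blast
qed

lemma path_dist:
  assumes p: "p \<in> delta_paths G S n \<delta> x0" and ij: "i \<le> j" "j \<le> n"
  shows "d (p ! i) (p ! j) \<le> (j - i) * nat \<lceil>\<delta>\<rceil>"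
  using ij
proof (induction j)
  case 0 then show ?case using d_self dp_carrier[OF p] by simp
next
  case (Suc j)
  show ?case
  proof (cases "i = Suc j")
    case True then show ?thesis using d_self dp_carrier[OF p] Suc by simp
  next
    case False
    then have ij': "i \<le> j" "j < n" using Suc by auto
    have st: "d (p ! j) (p ! Suc j) \<le> nat \<lceil>\<delta>\<rceil>"
      using p ij' unfolding delta_paths_def by (intro nat_ceil_ge) auto
    have "d (p ! i) (p ! Suc j) \<le> d (p ! i) (p ! j) + d (p ! j) (p ! Suc j)"
      using dp_carrier[OF p] ij' Suc by (intro d_tri) auto
    also have "\<dots> \<le> (j - i) * nat \<lceil>\<delta>\<rceil> + nat \<lceil>\<delta>\<rceil>" using Suc.IH ij' st by auto
    also have "\<dots> = (Suc j - i) * nat \<lceil>\<delta>\<rceil>" using ij' by (simp add: Suc_diff_le)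
    finally show ?thesis .
  qed
qed

lemma sep_card:
  assumes k: "k \<ge> 1" and R: "real (2 * k * nat \<lceil>\<delta>\<rceil>) \<le> R" and dl: "\<delta> \<ge> 1"
    and P: "P \<subseteq> delta_paths G S n \<delta> \<one>" "path_separated G S n R P" "finite P"
  shows "card P \<le> card (B (k * nat \<lceil>\<delta>\<rceil>)) ^ (n div k)"
proof -
  define cc where "cc = nat \<lceil>\<delta>\<rceil>"
  have c1: "cc \<ge> 1" using dl unfolding cc_def by linarith
  define m where "m = n div k"
  have mk: "m * k \<le> n" unfolding m_def by simp
  define \<phi> where "\<phi> p = map (\<lambda>j. inv (p ! (j * k)) \<otimes> p ! (Suc j * k)) [0..<m]" for p
  have mem: "\<phi> p \<in> {xs. set xs \<subseteq> B (k * cc) \<and> length xs = m}" if p: "p \<in> P" for p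
  proof -
    have pd: "p \<in> delta_paths G S n \<delta> \<one>" using p P by auto
    have "inv (p ! (j * k)) \<otimes> p ! (Suc j * k) \<in> B (k * cc)" if j: "j < m" for j
    proof -
      have le: "Suc j * k \<le> n" using j mk by (meson Suc_leI le_trans mult_le_mono1)
      have c1': "p ! (j * k) \<in> carrier G" "p ! (Suc j * k) \<in> carrier G" using dp_carrier[OF pd] le by auto
      have "d (p ! (j * k)) (p ! (Suc j * k)) \<le> (Suc j * k - j * k) * cc"
        unfolding cc_def using path_dist[OF pd _ le, of "j * k"] by simp
      then show ?thesis unfolding word_ball_def using c1' d_one by (simp add: mult.commute)
    qed
    then show ?thesis unfolding \<phi>_def by auto
  qed
  have inj: "inj_on \<phi> P"
  proof (rule inj_onI, rule ccontr)
    fix p q assume p: "p \<in> P" and q: "q \<in> P" and eq: "\<phi> p = \<phi> q" and ne: "p \<noteq> q"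
    have pd: "p \<in> delta_paths G S n \<delta> \<one>" and qd: "q \<in> delta_paths G S n \<delta> \<one>" using p q P by auto
    have samp: "p ! (j * k) = q ! (j * k)" if "j \<le> m" for j
      using that
    proof (induction j)
      case 0 then show ?case using pd qd unfolding delta_paths_def by simp
    next
      case (Suc j)
      then have j: "j < m" by simp
      have le: "Suc j * k \<le> n" using j mk by (meson Suc_leI le_trans mult_le_mono1)
      have c1': "p ! (j * k) \<in> carrier G" "p ! (Suc j * k) \<in> carrier G"
        "q ! (j * k) \<in> carrier G" "q ! (Suc j * k) \<in> carrier G" using dp_carrier[OF pd] dp_carrier[OF qd] le by auto
      have "inv (p ! (j * k)) \<otimes> p ! (Suc j * k) = inv (q ! (j * k)) \<otimes> q ! (Suc j * k)"
        using arg_cong[OF eq, of "\<lambda>l. l ! j"] j unfolding \<phi>_def by simp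
      then show ?case using Suc j c1' by (metis inv_closed l_cancel less_imp_le)
    qed
    obtain i where i: "i \<le> n" "R \<le> real (d (p ! i) (q ! i))"
      using P(2) p q ne unfolding path_separated_def by blast
    define j where "j = i div k"
    have jm: "j \<le> m" unfolding j_def m_def using i by (simp add: div_le_mono)
    have jk: "j * k \<le> i" unfolding j_def by simp
    have "i - j * k = i mod k" unfolding j_def by (simp add: minus_div_mult_eq_mod)
    then have ik: "i - j * k < k" using k by simp
    have cp: "p ! i \<in> carrier G" "q ! i \<in> carrier G" "p ! (j * k) \<in> carrier G" "q ! (j * k) \<in> carrier G"
      using dp_carrier[OF pd] dp_carrier[OF qd] i jk by auto
    have "d (p ! i) (q ! i) \<le> d (p ! i) (p ! (j * k)) + d (p ! (j * k)) (q ! i)"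
      using cp by (intro d_tri) auto
    also have "\<dots> = d (p ! (j * k)) (p ! i) + d (q ! (j * k)) (q ! i)"
      using cp samp[OF jm] d_sym by auto
    also have "\<dots> \<le> (i - j * k) * cc + (i - j * k) * cc"
      unfolding cc_def using path_dist[OF pd jk i(1)] path_dist[OF qd jk i(1)] by auto
    also have "\<dots> < 2 * k * cc"
    proof -
      have "(i - j * k) * cc < k * cc" using ik c1 by (intro mult_strict_right_mono) auto
      then show ?thesis by linarith
    qed
    finally have "real (d (p ! i) (q ! i)) < real (2 * k * cc)" by linarith
    then show False using i(2) R unfolding cc_def by linarith
  qed
  have "card P = card (\<phi> ` P)" using inj by (simp add: card_image)
  also have "\<dots> \<le> card {xs. set xs \<subseteq> B (k * cc) \<and> length xs = m}"
    using mem by (intro card_mono) (auto simp: finite_lists_length_eq ball_finite)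
  also have "\<dots> = card (B (k * cc)) ^ m" by (simp add: card_lists_length_eq ball_finite)
  finally show ?thesis unfolding m_def cc_def .
qed


lemma sep_upper:
  assumes "finite P" "P \<subseteq> delta_paths G S n \<delta> \<one>" "path_separated G S n R P"
  shows "ereal (real (card P)) \<le> sep_count G S n R \<delta> \<one>"
  unfolding sep_count_def using assms by (intro SUP_upper) auto

lemma sep_ge1:
  assumes "\<delta> \<ge> 0"
  shows "1 \<le> sep_count G S n R \<delta> \<one>"
proof -
  let ?p = "replicate (Suc n) \<one>"
  have "?p \<in> delta_paths G S n \<delta> \<one>"
    unfolding delta_paths_def using assms d_self[OF one_closed] by (auto simp del: replicate_Suc)
  moreover have "path_separated G S n R {?p}" unfolding path_separated_def by auto
  ultimately have "ereal (real (card {?p})) \<le> sep_count G S n R \<delta> \<one>"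
    by (intro sep_upper) auto
  then show ?thesis by (simp add: one_ereal_def)
qed

lemma sep_le:
  assumes k: "k \<ge> 1" and R: "real (2 * k * nat \<lceil>\<delta>\<rceil>) \<le> R" and dl: "\<delta> \<ge> 1"
  shows "sep_count G S n R \<delta> \<one> \<le> ereal (real (card (B (k * nat \<lceil>\<delta>\<rceil>)) ^ (n div k)))"
  unfolding sep_count_def using sep_card[OF k R dl]
  by (intro SUP_least) (auto simp del: of_nat_power simp: of_nat_power[symmetric])

lemma sep_anti:
  assumes "R \<le> R'"
  shows "sep_count G S n R' \<delta> \<one> \<le> sep_count G S n R \<delta> \<one>"
proof -
  have "path_separated G S n R P" if "path_separated G S n R' P" for P
    using that assms unfolding path_separated_def by force
  then show ?thesis unfolding sep_count_def by (intro SUP_subset_mono) auto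
qed

end

lemma eln_ge0: "1 \<le> x \<Longrightarrow> 0 \<le> eln x"
  unfolding eln_def by (cases x) auto

lemma eln_le: "1 \<le> x \<Longrightarrow> x \<le> ereal y \<Longrightarrow> eln x \<le> ereal (ln y)"
  unfolding eln_def by (cases x) auto

lemma eln_ge: "0 < y \<Longrightarrow> ereal y \<le> x \<Longrightarrow> ereal (ln y) \<le> eln x"
  unfolding eln_def by (cases x) auto

lemma eln_mono: "1 \<le> x \<Longrightarrow> x \<le> y \<Longrightarrow> eln x \<le> eln y"
  unfolding eln_def by (cases x; cases y) auto

lemma antitone_tendsto:
  fixes f :: "real \<Rightarrow> ereal"
  assumes "\<And>x y. x \<le> y \<Longrightarrow> f y \<le> f x"
  shows "(f \<longlongrightarrow> (INF x. f x)) at_top"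
proof (rule order_tendstoI)
  fix a assume "a < (INF x. f x)"
  then show "eventually (\<lambda>x. a < f x) at_top"
    by (meson INF_lower UNIV_I always_eventually order_less_le_trans)
next
  fix a assume "(INF x. f x) < a"
  then obtain x where "f x < a" by (auto simp: INF_less_iff)
  then show "eventually (\<lambda>y. f y < a) at_top"
    using assms by (intro eventually_mono[OF eventually_ge_at_top[of x]]) (meson order_le_less_trans)
qed

context wgrp begin


lemma ball_step: "card (B (Suc r)) \<le> (1 + 2 * card S) * card (B r)"
proof -
  let ?U = "B r \<union> (\<Union>s\<in>S. (\<lambda>g. g \<otimes> s) ` B r \<union> (\<lambda>g. g \<otimes> inv s) ` B r)"
  have sub: "B (Suc r) \<subseteq> ?U"
  proof
    fix g assume g: "g \<in> B (Suc r)"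
    then have gc: "g \<in> carrier G" and dg: "d \<one> g \<le> Suc r" unfolding word_ball_def by auto
    show "g \<in> ?U"
    proof (cases "d \<one> g \<le> r")
      case True then show ?thesis using gc unfolding word_ball_def by auto
    next
      case False
      then have "d \<one> g = Suc r" using dg by auto
      then have "(A ^^ Suc r) \<one> g" using d_reach[OF one_closed gc] by simp
      then obtain z where z: "(A ^^ r) \<one> z" "A z g" by (auto elim: relpowp_Suc_E)
      have zB: "z \<in> B r" using z(1) d_le[OF one_closed z(1)] pow_carrier[OF z(1)] unfolding word_ball_def by auto
      obtain s where s: "s \<in> S" "g = z \<otimes> s \<or> z = g \<otimes> s" and c: "z \<in> carrier G"
        using z(2) unfolding adj_def by auto
      have sc: "s \<in> carrier G" using s SG by auto
      have "g = z \<otimes> s \<or> g = z \<otimes> inv s"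
        using s(2) c sc gc by (metis inv_solve_right)
      then show ?thesis using zB s(1) by auto
    qed
  qed
  have "card (B (Suc r)) \<le> card ?U" using sub ball_finite finS by (intro card_mono) auto
  also have "\<dots> \<le> card (B r) + card (\<Union>s\<in>S. (\<lambda>g. g \<otimes> s) ` B r \<union> (\<lambda>g. g \<otimes> inv s) ` B r)"
    by (rule card_Un_le)
  also have "card (\<Union>s\<in>S. (\<lambda>g. g \<otimes> s) ` B r \<union> (\<lambda>g. g \<otimes> inv s) ` B r)
      \<le> (\<Sum>s\<in>S. card ((\<lambda>g. g \<otimes> s) ` B r \<union> (\<lambda>g. g \<otimes> inv s) ` B r))"
    using finS by (rule card_UN_le)
  also have "\<dots> \<le> (\<Sum>s\<in>S. 2 * card (B r))"
  proof (rule sum_mono)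
    fix s
    have "card ((\<lambda>g. g \<otimes> s) ` B r \<union> (\<lambda>g. g \<otimes> inv s) ` B r)
        \<le> card ((\<lambda>g. g \<otimes> s) ` B r) + card ((\<lambda>g. g \<otimes> inv s) ` B r)" by (rule card_Un_le)
    also have "\<dots> \<le> card (B r) + card (B r)" using card_image_le[OF ball_finite] by (intro add_mono) auto
    finally show "card ((\<lambda>g. g \<otimes> s) ` B r \<union> (\<lambda>g. g \<otimes> inv s) ` B r) \<le> 2 * card (B r)" by simp
  qed
  also have "\<dots> = card S * (2 * card (B r))" by simp
  finally show ?thesis by (simp add: algebra_simps)
qed

lemma ball0: "B 0 = {\<one>}"
proof -
  have "g = \<one>" if "g \<in> B 0" for g
  proof -
    from that have gc: "g \<in> carrier G" and "d \<one> g = 0" unfolding word_ball_def by auto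
    then have "(A ^^ 0) \<one> g" using d_reach[OF one_closed gc] by metis
    then show ?thesis by auto
  qed
  then show ?thesis using one_ball by auto
qed

lemma ball_pow: "card (B r) \<le> (1 + 2 * card S) ^ r"
proof (induction r)
  case 0 then show ?case by (simp add: ball0)
next
  case (Suc r)
  then show ?case using ball_step[of r] by (metis mult_le_mono2 order_trans power_Suc)
qed

lemma growth_upper: "\<exists>D0\<ge>1. \<forall>D\<ge>D0. \<forall>r. real (card (B r)) \<le> real D * exp (real (D * r))"
proof -
  define M where "M = 1 + 2 * card S"
  have M1: "M \<ge> 1" unfolding M_def by simp
  define D0 where "D0 = nat \<lceil>ln (real M)\<rceil> + 1"
  have "\<forall>D\<ge>D0. \<forall>r. real (card (B r)) \<le> real D * exp (real (D * r))"
  proof (intro allI impI)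
    fix D r :: nat assume D: "D \<ge> D0"
    have lnM: "ln (real M) \<le> real D" using D unfolding D0_def by linarith
    have "real (card (B r)) \<le> real M ^ r" using ball_pow[of r] unfolding M_def
      by (metis of_nat_le_iff of_nat_power)
    also have "\<dots> = exp (real r * ln (real M))" using M1 by (simp add: exp_of_nat_mult)
    also have "\<dots> \<le> exp (real (D * r))" using mult_left_mono[OF lnM, of "real r"] by (simp add: mult.commute)
    also have "\<dots> \<le> real D * exp (real (D * r))" using D unfolding D0_def by simp
    finally show "real (card (B r)) \<le> real D * exp (real (D * r))" .
  qed
  then show ?thesis unfolding D0_def by (intro exI[of _ D0]) (auto simp: D0_def)
qed

lemma nonexp_witness:
  assumes "\<not> exponential_growth G S"
  shows "\<exists>D0\<ge>1. \<forall>D\<ge>D0. \<exists>r. real D * real (card (B (D * r))) < exp (real r)"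
proof -
  obtain D0 where D0: "D0 \<ge> 1" "\<forall>D\<ge>D0. \<forall>r. real (card (B r)) \<le> real D * exp (real (D * r))"
    using growth_upper by blast
  have "\<exists>r. real D * real (card (B (D * r))) < exp (real r)" if "D \<ge> D0" for D
    using assms D0 that unfolding exponential_growth_def by (meson not_le)
  then show ?thesis using D0 by blast
qed


lemma tm_ge0:
  assumes "\<delta> \<ge> 0" "n \<ge> 1"
  shows "0 \<le> tm G S n R \<delta>"
proof -
  have "0 \<le> eln (sep_count G S n R \<delta> \<one>)" using sep_ge1[OF assms(1)] by (rule eln_ge0)
  then have "0 / ereal (real n) \<le> eln (sep_count G S n R \<delta> \<one>) / ereal (real n)"
    using assms by (intro ereal_divide_right_mono) auto
  then show ?thesis unfolding tm_def by simp
qed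

lemma limsup_ge0: "\<delta> \<ge> 0 \<Longrightarrow> 0 \<le> limsup (\<lambda>n. tm G S n R \<delta>)"
  by (intro le_Limsup) (auto intro!: eventually_mono[OF eventually_ge_at_top[of 1]] tm_ge0)

lemma tm_le2:
  assumes k: "k \<ge> 1" and R: "real (2 * k * nat \<lceil>\<delta>\<rceil>) \<le> R" and dl: "\<delta> \<ge> 1" and n: "n \<ge> 1"
  shows "tm G S n R \<delta> \<le> ereal (ln (real (card (B (k * nat \<lceil>\<delta>\<rceil>)))) / real k)"
proof -
  define N where "N = card (B (k * nat \<lceil>\<delta>\<rceil>))"
  define m where "m = n div k"
  have N1: "N \<ge> 1" unfolding N_def by (rule card_ball_ge1)
  have lnN: "ln (real N) \<ge> 0" using N1 by simp
  have "eln (sep_count G S n R \<delta> \<one>) \<le> ereal (ln (real N ^ m))"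
    using sep_ge1[of \<delta> n R] sep_le[OF k R dl, of n] dl unfolding N_def m_def by (intro eln_le) auto
  also have "\<dots> = ereal (real m * ln (real N))" using N1 by (simp add: ln_realpow)
  finally have "tm G S n R \<delta> \<le> ereal (real m * ln (real N)) / ereal (real n)"
    unfolding tm_def using n by (intro ereal_divide_right_mono) auto
  also have "\<dots> = ereal (real m * ln (real N) / real n)" using n by simp
  also have "\<dots> \<le> ereal (ln (real N) / real k)"
  proof -
    have "m * k \<le> n" unfolding m_def by simp
    then have "real m * real k \<le> real n" by (metis of_nat_le_iff of_nat_mult)
    then have "real m \<le> real n / real k" using k by (simp add: field_simps)
    then have "real m * ln (real N) \<le> real n / real k * ln (real N)" using lnN by (rule mult_right_mono)
    then have "real m * ln (real N) / real n \<le> ln (real N) / real k" using n by (simp add: field_simps)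
    then show ?thesis by simp
  qed
  finally show ?thesis unfolding N_def .
qed

lemma dir2:
  assumes ne: "\<not> exponential_growth G S" and dl: "\<delta> \<ge> 1"
  shows "((\<lambda>R. limsup (\<lambda>n. tm G S n R \<delta>)) \<longlongrightarrow> 0) at_top"
proof (rule order_tendstoI)
  fix a :: ereal assume "a < 0"
  then show "eventually (\<lambda>R. a < limsup (\<lambda>n. tm G S n R \<delta>)) at_top"
    using limsup_ge0[of \<delta>] dl by (intro always_eventually) (meson order_less_le_trans order.trans zero_le_one allI)
next
  fix a :: ereal assume a: "0 < a"
  obtain D0 where D0: "D0 \<ge> 1" "\<forall>D\<ge>D0. \<exists>r. real D * real (card (B (D * r))) < exp (real r)"
    using nonexp_witness[OF ne] by blast
  obtain D' :: nat where D': "D' \<ge> D0" "ereal (1 / real D') < a"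
  proof (cases a)
    case (real x)
    then have x: "x > 0" using a by simp
    obtain m :: nat where m: "1 / x < real m" using reals_Archimedean2 by blast
    define D' where "D' = max m D0"
    have "real m \<le> real D'" unfolding D'_def by simp
    then have "1 / x < real D'" using m by linarith
    then have "1 < real D' * x" using x by (simp add: field_simps)
    moreover have "real D' > 0" using \<open>1 / x < real D'\<close> x
      by (meson less_trans zero_less_divide_1_iff)
    ultimately have "1 / real D' < x" by (simp add: field_simps)
    then show ?thesis using that[of D'] real unfolding D'_def by auto
  next
    case PInf then show ?thesis using that[of D0] by auto
  next
    case MInf then show ?thesis using a by auto
  qed
  define c where "c = nat \<lceil>\<delta>\<rceil>"
  have c1: "c \<ge> 1" using dl unfolding c_def by linarith
  define D where "D = c * D'"
  have DD0: "D \<ge> D0" unfolding D_def using c1 D'(1) by (metis le_trans mult_le_mono1 mult_1)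
  have D'1: "D' \<ge> 1" using D0 D' by simp
  have D1: "D \<ge> 1" using DD0 D0 by simp
  obtain r where r: "real D * real (card (B (D * r))) < exp (real r)" using D0(2) DD0 by blast
  define N where "N = card (B (D * r))"
  have N1: "N \<ge> 1" unfolding N_def by (rule card_ball_ge1)
  have r1: "r \<ge> 1"
  proof (rule ccontr)
    assume "\<not> r \<ge> 1"
    then have "r = 0" by simp
    then show False using r D1 N1 unfolding N_def
      by (simp add: ball0)
  qed
  define k where "k = D' * r"
  have k1: "k \<ge> 1" unfolding k_def using D'1 r1 by simp
  have kc: "k * c = D * r" unfolding k_def D_def by simp
  have "real N \<le> real D * real N" using mult_right_mono[of 1 "real D" "real N"] D1 by simp
  then have "real N < exp (real r)" using r unfolding N_def by linarith
  then have "ln (real N) < ln (exp (real r))" using N1 by (subst ln_less_cancel_iff) auto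
  then have lnN: "ln (real N) < real r" by simp
  have bnd: "ln (real N) / real k < 1 / real D'"
  proof -
    have "ln (real N) / real k < real r / real k" using lnN k1 by (simp add: divide_strict_right_mono)
    also have "real r / real k = 1 / real D'" unfolding k_def using r1 by simp
    finally show ?thesis .
  qed
  show "eventually (\<lambda>R. limsup (\<lambda>n. tm G S n R \<delta>) < a) at_top"
  proof (rule eventually_mono[OF eventually_ge_at_top[of "real (2 * k * c)"]])
    fix R assume R: "real (2 * k * c) \<le> R"
    have "limsup (\<lambda>n. tm G S n R \<delta>) \<le> ereal (ln (real N) / real k)"
      using tm_le2[OF k1 R[unfolded c_def] dl] kc unfolding N_def c_def
      by (intro Limsup_bounded eventually_mono[OF eventually_ge_at_top[of 1]]) auto
    also have "\<dots> < ereal (1 / real D')" using bnd by simp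
    also have "\<dots> < a" by (rule D'(2))
    finally show "limsup (\<lambda>n. tm G S n R \<delta>) < a" .
  qed
qed


lemma cover:
  fixes R :: real
  shows "\<exists>E. E \<subseteq> B N \<and> (\<forall>e\<in>E. \<forall>e'\<in>E. e \<noteq> e' \<longrightarrow> R \<le> real (d e e')) \<and>
     card (B N) \<le> card E * card (B (nat \<lceil>R\<rceil>))"
proof -
  define P where "P E \<longleftrightarrow> E \<subseteq> B N \<and> (\<forall>e\<in>E. \<forall>e'\<in>E. e \<noteq> e' \<longrightarrow> R \<le> real (d e e'))" for E
  have "P {}" unfolding P_def by auto
  moreover have "\<forall>E. P E \<longrightarrow> card E < Suc (card (B N))"
  proof (intro allI impI)
    fix E assume "P E"
    then have "card E \<le> card (B N)" unfolding P_def using ball_finite by (intro card_mono) auto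
    then show "card E < Suc (card (B N))" by simp
  qed
  ultimately obtain E where E: "P E" and mx: "\<forall>E'. P E' \<longrightarrow> card E' \<le> card E"
    using ex_has_greatest_nat[of P "{}" card] by blast
  have fE: "finite E" using E ball_finite unfolding P_def by (meson finite_subset)
  let ?R = "nat \<lceil>R\<rceil>"
  have covers: "\<exists>e\<in>E. g \<in> {x\<in>carrier G. d e x \<le> ?R}" if g: "g \<in> B N" for g
  proof (rule ccontr)
    assume nc: "\<not> ?thesis"
    have gc: "g \<in> carrier G" using g unfolding word_ball_def by auto
    have far: "R \<le> real (d e g)" if "e \<in> E" for e
    proof -
      have ec: "e \<in> carrier G" using that E unfolding P_def word_ball_def by auto
      from nc that gc have "\<not> d e g \<le> ?R" by auto
      then show ?thesis by linarith
    qed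
    have gE: "g \<notin> E"
    proof
      assume "g \<in> E"
      then have "R \<le> real (d g g)" by (rule far)
      then have "R \<le> 0" using d_self[OF gc] by simp
      then have "d g g \<le> ?R" using d_self[OF gc] by simp
      then show False using nc \<open>g \<in> E\<close> gc by auto
    qed
    have "P (insert g E)" unfolding P_def
    proof (intro conjI ballI impI)
      show "insert g E \<subseteq> B N" using g E unfolding P_def by auto
    next
      fix e e' assume e: "e \<in> insert g E" and e': "e' \<in> insert g E" and ne: "e \<noteq> e'"
      show "R \<le> real (d e e')"
      proof (cases "e = g")
        case True
        then have e'E: "e' \<in> E" using e' ne by auto
        then have "e' \<in> carrier G" using E unfolding P_def word_ball_def by auto
        then have "d g e' = d e' g" using d_sym gc by blast
        then show ?thesis using far[OF e'E] True by simp
      next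
        case False
        then have eE: "e \<in> E" using e by auto
        show ?thesis
        proof (cases "e' = g")
          case True then show ?thesis using far[OF eE] by simp
        next
          case False then show ?thesis using eE e' ne E unfolding P_def by auto
        qed
      qed
    qed
    then have "card (insert g E) \<le> card E" by (rule mx[rule_format])
    then show False using gE fE by simp
  qed
  have "B N \<subseteq> (\<Union>e\<in>E. {x\<in>carrier G. d e x \<le> ?R})"
  proof
    fix g assume "g \<in> B N"
    from covers[OF this] obtain e where "e \<in> E" "g \<in> {x\<in>carrier G. d e x \<le> ?R}" by blast
    then show "g \<in> (\<Union>e\<in>E. {x\<in>carrier G. d e x \<le> ?R})" by (rule UN_I)
  qed
  moreover have "finite (\<Union>e\<in>E. {x\<in>carrier G. d e x \<le> ?R})"
  proof (intro finite_UN_I[OF fE] finite_cball)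
    fix e assume "e \<in> E"
    then show "e \<in> carrier G" using E unfolding P_def word_ball_def by auto
  qed
  ultimately have "card (B N) \<le> card (\<Union>e\<in>E. {x\<in>carrier G. d e x \<le> ?R})"
    by (intro card_mono)
  also have "\<dots> \<le> (\<Sum>e\<in>E. card {x\<in>carrier G. d e x \<le> ?R})" using fE by (rule card_UN_le)
  also have "\<dots> \<le> (\<Sum>e\<in>E. card (B ?R))"
  proof (intro sum_mono card_cball)
    fix e assume "e \<in> E"
    then show "e \<in> carrier G" using E unfolding P_def word_ball_def by auto
  qed
  also have "\<dots> = card E * card (B ?R)" by simp
  finally have fin: "card (B N) \<le> card E * card (B ?R)" .
  show ?thesis using E fin unfolding P_def by (intro exI[of _ E]) simp
qed

lemma geo_path:
  assumes e: "e \<in> B (n * nat \<lfloor>\<delta>\<rfloor>)" and dl: "\<delta> \<ge> 1"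
  shows "\<exists>p. p \<in> delta_paths G S n \<delta> \<one> \<and> p ! n = e"
proof -
  define dd where "dd = nat \<lfloor>\<delta>\<rfloor>"
  have ec: "e \<in> carrier G" using e unfolding word_ball_def by auto
  define L where "L = d \<one> e"
  have LN: "L \<le> n * dd" using e unfolding L_def dd_def word_ball_def by auto
  have "(A ^^ L) \<one> e" unfolding L_def using d_reach[OF one_closed ec] .
  then obtain f where f: "f 0 = \<one>" "f L = e" "\<forall>i<L. A (f i) (f (Suc i))"
    unfolding relpowp_fun_conv by blast
  have seg: "(A ^^ (b - a)) (f a) (f b)" if "a \<le> b" "b \<le> L" for a b
    using that
  proof (induction b)
    case 0 then show ?case by simp
  next
    case (Suc b)
    show ?case
    proof (cases "a = Suc b")
      case True then show ?thesis by simp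
    next
      case False
      then have "a \<le> b" "b < L" using Suc by auto
      then have "(A ^^ (b - a)) (f a) (f b)" "A (f b) (f (Suc b))" using Suc f(3) by auto
      then have "(A ^^ Suc (b - a)) (f a) (f (Suc b))" by (rule relpowp_Suc_I)
      then show ?thesis using \<open>a \<le> b\<close> by (simp add: Suc_diff_le)
    qed
  qed
  have fc: "f j \<in> carrier G" if "j \<le> L" for j
    using seg[of 0 j] that f(1) pow_carrier by fastforce
  have fd: "d (f a) (f b) \<le> b - a" if "a \<le> b" "b \<le> L" for a b
    using seg[OF that] fc that by (intro d_le) auto
  define p where "p = map (\<lambda>i. f (min (i * dd) L)) [0..<Suc n]"
  have pn: "p ! i = f (min (i * dd) L)" if "i \<le> n" for i
    unfolding p_def using that by (simp del: upt_Suc add: nth_map_upt)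
  have "p \<in> delta_paths G S n \<delta> \<one>"
    unfolding delta_paths_def
  proof (intro CollectI conjI allI impI)
    show "length p = Suc n" unfolding p_def by simp
    show "set p \<subseteq> carrier G" unfolding p_def using fc by auto
    show "p ! 0 = \<one>" using pn[of 0] f(1) by simp
    fix i assume i: "i < n"
    have "d (p ! i) (p ! Suc i) \<le> min (Suc i * dd) L - min (i * dd) L"
    proof -
      have "p ! i = f (min (i * dd) L)" "p ! Suc i = f (min (Suc i * dd) L)" using pn[of i] pn[of "Suc i"] i by auto
      moreover have "min (i * dd) L \<le> min (Suc i * dd) L" by (simp add: min_def)
      ultimately show ?thesis using fd by simp
    qed
    also have "\<dots> \<le> dd" by (simp add: min_def) linarith
    finally have "real (d (p ! i) (p ! Suc i)) \<le> real dd" by simp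
    also have "real dd \<le> \<delta>" unfolding dd_def using dl by linarith
    finally show "real (d (p ! i) (p ! Suc i)) \<le> \<delta>" .
  qed
  moreover have "p ! n = e" using pn[of n] LN f(2) by (simp add: min_def mult.commute)
  ultimately show ?thesis by blast
qed

lemma lb_sep:
  assumes dl: "\<delta> \<ge> 1"
  shows "\<exists>P. finite P \<and> P \<subseteq> delta_paths G S n \<delta> \<one> \<and> path_separated G S n R P \<and>
     card (B (n * nat \<lfloor>\<delta>\<rfloor>)) \<le> card P * card (B (nat \<lceil>R\<rceil>))"
proof -
  obtain E where E: "E \<subseteq> B (n * nat \<lfloor>\<delta>\<rfloor>)" "\<forall>e\<in>E. \<forall>e'\<in>E. e \<noteq> e' \<longrightarrow> R \<le> real (d e e')"
    "card (B (n * nat \<lfloor>\<delta>\<rfloor>)) \<le> card E * card (B (nat \<lceil>R\<rceil>))"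
    using cover[of "n * nat \<lfloor>\<delta>\<rfloor>" R] by (elim exE conjE)
  have "\<forall>e\<in>E. \<exists>p. p \<in> delta_paths G S n \<delta> \<one> \<and> p ! n = e"
  proof
    fix e assume "e \<in> E"
    then have "e \<in> B (n * nat \<lfloor>\<delta>\<rfloor>)" using E(1) by blast
    then show "\<exists>p. p \<in> delta_paths G S n \<delta> \<one> \<and> p ! n = e" by (rule geo_path[OF _ dl])
  qed
  from bchoice[OF this] obtain pth where pth: "\<forall>e\<in>E. pth e \<in> delta_paths G S n \<delta> \<one> \<and> pth e ! n = e"
    by blast
  have fE: "finite E" using E(1) ball_finite by (rule finite_subset)
  have inj: "inj_on pth E"
  proof (rule inj_onI)
    fix x y assume xy: "x \<in> E" "y \<in> E" "pth x = pth y"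
    have "pth x ! n = x" using bspec[OF pth xy(1)] by (rule conjunct2)
    moreover have "pth y ! n = y" using bspec[OF pth xy(2)] by (rule conjunct2)
    ultimately show "x = y" using xy(3) by metis
  qed
  have sep: "path_separated G S n R (pth ` E)"
    unfolding path_separated_def
  proof (intro ballI impI)
    fix p q assume pq: "p \<in> pth ` E" "q \<in> pth ` E" "p \<noteq> q"
    then obtain e e' where ee: "e \<in> E" "e' \<in> E" "p = pth e" "q = pth e'" by (elim imageE) simp
    then have ne: "e \<noteq> e'" using pq(3) by auto
    have "p ! n = e" using bspec[OF pth ee(1)] ee(3) by simp
    moreover have "q ! n = e'" using bspec[OF pth ee(2)] ee(4) by simp
    moreover have "R \<le> real (d e e')" using E(2) ee(1,2) ne by blast
    ultimately show "\<exists>i\<le>n. R \<le> real (d (p ! i) (q ! i))" by (intro exI[of _ n]) simp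
  qed
  have "pth ` E \<subseteq> delta_paths G S n \<delta> \<one>"
  proof
    fix p assume "p \<in> pth ` E"
    then obtain e where "e \<in> E" "p = pth e" by blast
    then show "p \<in> delta_paths G S n \<delta> \<one>" using bspec[OF pth] by simp
  qed
  moreover have "card (pth ` E) = card E" by (rule card_image[OF inj])
  ultimately show ?thesis using fE sep E(3) by (intro exI[of _ "pth ` E"]) simp
qed


lemma tm_lb:
  assumes D: "\<forall>r. exp (real r) \<le> real D * real (card (B (D * r)))" "D \<ge> 1"
    and dl: "\<delta> \<ge> 1" and n: "n \<ge> 1"
  shows "ereal ((real ((n * nat \<lfloor>\<delta>\<rfloor>) div D) - ln (real D) - ln (real (card (B (nat \<lceil>R\<rceil>))))) / real n)
     \<le> tm G S n R \<delta>"
proof -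
  define dd where "dd = nat \<lfloor>\<delta>\<rfloor>"
  define M where "M = card (B (nat \<lceil>R\<rceil>))"
  define r where "r = (n * dd) div D"
  have M1: "M \<ge> 1" unfolding M_def by (rule card_ball_ge1)
  obtain P where P: "finite P" "P \<subseteq> delta_paths G S n \<delta> \<one>" "path_separated G S n R P"
     "card (B (n * dd)) \<le> card P * M"
    using lb_sep[OF dl, of n R] unfolding dd_def M_def by blast
  have "D * r \<le> n * dd" unfolding r_def by simp
  then have "card (B (D * r)) \<le> card (B (n * dd))" by (rule card_ball_mono)
  then have "card (B (D * r)) \<le> card P * M" using P(4) by simp
  then have "real (card (B (D * r))) \<le> real (card P) * real M" by (metis of_nat_le_iff of_nat_mult)
  then have "exp (real r) \<le> real D * (real (card P) * real M)"
    using D(1)[rule_format, of r] D(2) by (meson mult_left_mono of_nat_0_le_iff order_trans)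
  then have y: "exp (real r) / (real D * real M) \<le> real (card P)"
    using D(2) M1 by (simp add: field_simps)
  have ypos: "0 < exp (real r) / (real D * real M)" using D(2) M1 by simp
  have "ereal (exp (real r) / (real D * real M)) \<le> sep_count G S n R \<delta> \<one>"
    using y sep_upper[OF P(1,2,3)] by (meson ereal_less_eq(3) order_trans)
  then have "ereal (ln (exp (real r) / (real D * real M))) \<le> eln (sep_count G S n R \<delta> \<one>)"
    using ypos by (rule eln_ge[rotated])
  moreover have "ln (exp (real r) / (real D * real M)) = real r - ln (real D) - ln (real M)"
    using D(2) M1 by (simp add: ln_div ln_mult)
  ultimately have "ereal (real r - ln (real D) - ln (real M)) \<le> eln (sep_count G S n R \<delta> \<one>)" by simp
  then have "ereal (real r - ln (real D) - ln (real M)) / ereal (real n) \<le> tm G S n R \<delta>"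
    unfolding tm_def using n by (intro ereal_divide_right_mono) auto
  then show ?thesis using n unfolding r_def dd_def M_def by simp
qed

lemma div_lb: "D \<ge> (1::nat) \<Longrightarrow> real a / real D - 1 \<le> real (a div D)"
proof -
  assume D: "D \<ge> 1"
  have "a < (a div D + 1) * D" using D by (metis div_mult_mod_eq add_less_mono1 mod_less_divisor
      distrib_right mult_1 less_le_trans zero_less_one add.commute nat_add_left_cancel_less mult.commute)
  then have "real a < (real (a div D) + 1) * real D" by (metis of_nat_less_iff of_nat_mult of_nat_add of_nat_1)
  then show ?thesis using D by (simp add: field_simps)
qed

lemma limsup_lb:
  assumes D: "\<forall>r. exp (real r) \<le> real D * real (card (B (D * r)))" "D \<ge> 1"
    and dl: "\<delta> \<ge> 1"
  shows "ereal (real (nat \<lfloor>\<delta>\<rfloor>) / (2 * real D)) \<le> limsup (\<lambda>n. tm G S n R \<delta>)"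
proof (rule le_Limsup)
  define dd where "dd = nat \<lfloor>\<delta>\<rfloor>"
  define M where "M = card (B (nat \<lceil>R\<rceil>))"
  define C where "C = 1 + ln (real D) + ln (real M)"
  have M1: "M \<ge> 1" unfolding M_def by (rule card_ball_ge1)
  have dd1: "dd \<ge> 1" unfolding dd_def using dl by linarith
  have C1: "C \<ge> 1" unfolding C_def using D(2) M1 by simp
  show "sequentially \<noteq> bot" by simp
  show "\<forall>\<^sub>F n in sequentially. ereal (real (nat \<lfloor>\<delta>\<rfloor>) / (2 * real D)) \<le> tm G S n R \<delta>"
  proof (rule eventually_mono[OF eventually_ge_at_top[of "nat \<lceil>2 * real D * C\<rceil> + 1"]])
    fix n assume n: "nat \<lceil>2 * real D * C\<rceil> + 1 \<le> n"
    have n1: "n \<ge> 1" using n by simp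
    have nC: "2 * real D * C \<le> real n" using n by linarith
    have Dp: "real D > 0" using D(2) by simp
    have np: "real n > 0" using n1 by simp
    have "real (n * dd) / real D - 1 \<le> real ((n * dd) div D)" using div_lb[OF D(2)] .
    then have "(real (n * dd) / real D - C) / real n
        \<le> (real ((n * dd) div D) - ln (real D) - ln (real M)) / real n"
      using np unfolding C_def by (intro divide_right_mono) auto
    moreover have "real dd / (2 * real D) \<le> (real (n * dd) / real D - C) / real n"
    proof -
      have "C / real n \<le> 1 / (2 * real D)" using nC Dp np by (simp add: field_simps)
      also have "\<dots> \<le> real dd / (2 * real D)" using dd1 Dp by (simp add: divide_right_mono)
      finally have a: "C / real n \<le> real dd / (2 * real D)" .
      have "(real (n * dd) / real D - C) / real n = real dd / real D - C / real n"
        using np Dp by (simp add: field_simps)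
      also have "\<dots> \<ge> real dd / real D - real dd / (2 * real D)" using a by simp
      moreover have "real dd / real D - real dd / (2 * real D) = real dd / (2 * real D)"
        using Dp by (simp add: field_simps)
      ultimately show ?thesis by simp
    qed
    ultimately have "real dd / (2 * real D) \<le> (real ((n * dd) div D) - ln (real D) - ln (real M)) / real n"
      by linarith
    then have "ereal (real dd / (2 * real D)) \<le> ereal ((real ((n * dd) div D) - ln (real D) - ln (real M)) / real n)"
      by simp
    also have "\<dots> \<le> tm G S n R \<delta>" using tm_lb[OF D dl n1, of R] unfolding dd_def M_def .
    finally show "ereal (real (nat \<lfloor>\<delta>\<rfloor>) / (2 * real D)) \<le> tm G S n R \<delta>" unfolding dd_def .
  qed
qed

lemma limsup_anti:
  assumes "\<delta> \<ge> 0" "R \<le> R'"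
  shows "limsup (\<lambda>n. tm G S n R' \<delta>) \<le> limsup (\<lambda>n. tm G S n R \<delta>)"
proof (rule Limsup_mono[OF eventually_mono[OF eventually_ge_at_top[of 1]]])
  fix n :: nat assume n: "n \<ge> 1"
  have "eln (sep_count G S n R' \<delta> \<one>) \<le> eln (sep_count G S n R \<delta> \<one>)"
    using sep_ge1[OF assms(1)] sep_anti[OF assms(2)] by (rule eln_mono)
  then show "tm G S n R' \<delta> \<le> tm G S n R \<delta>"
    unfolding tm_def using n by (intro ereal_divide_right_mono) auto
qed

lemma dir1:
  assumes ex: "exponential_growth G S"
  shows "coarse_entropy G S = \<infinity>"
proof -
  obtain D :: nat where D0: "\<forall>r::nat. real (card (B r)) \<le> real D * exp (real (D * r)) \<and>
      exp (real r) \<le> real D * real (card (B (D * r)))"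
    using ex unfolding exponential_growth_def by blast
  then have D: "\<forall>r. exp (real r) \<le> real D * real (card (B (D * r)))" by blast
  have "exp (real (0::nat)) \<le> real D * real (card (B (D * 0)))" using D by blast
  then have D1: "D \<ge> 1" by (simp add: ball0)
  define h where "h \<delta> = Lim at_top (\<lambda>R. limsup (\<lambda>n. tm G S n R \<delta>))" for \<delta>
  have hb: "ereal (real (nat \<lfloor>\<delta>\<rfloor>) / (2 * real D)) \<le> h \<delta>" if dl: "\<delta> \<ge> 1" for \<delta>
  proof -
    have "((\<lambda>R. limsup (\<lambda>n. tm G S n R \<delta>)) \<longlongrightarrow> (INF R. limsup (\<lambda>n. tm G S n R \<delta>))) at_top"
      using dl by (intro antitone_tendsto limsup_anti) auto
    then have "h \<delta> = (INF R. limsup (\<lambda>n. tm G S n R \<delta>))" unfolding h_def by (intro tendsto_Lim) auto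
    also have "ereal (real (nat \<lfloor>\<delta>\<rfloor>) / (2 * real D)) \<le> \<dots>"
      using limsup_lb[OF D D1 dl] by (intro INF_greatest)
    finally show ?thesis by simp
  qed
  have "(h \<longlongrightarrow> \<infinity>) at_top"
    unfolding tendsto_PInfty
  proof
    fix r :: real
    show "eventually (\<lambda>\<delta>. ereal r < h \<delta>) at_top"
    proof (rule eventually_mono[OF eventually_ge_at_top[of "max 1 (2 * real D * (\<bar>r\<bar> + 1) + 1)"]])
      fix \<delta> :: real assume dl: "max 1 (2 * real D * (\<bar>r\<bar> + 1) + 1) \<le> \<delta>"
      have Dp: "real D > 0" using D1 by simp
      have "real (nat \<lfloor>\<delta>\<rfloor>) \<ge> 2 * real D * (\<bar>r\<bar> + 1)" using dl by linarith
      then have "real (nat \<lfloor>\<delta>\<rfloor>) / (2 * real D) \<ge> \<bar>r\<bar> + 1" using Dp by (simp add: field_simps)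
      then have "ereal r < ereal (real (nat \<lfloor>\<delta>\<rfloor>) / (2 * real D))" by simp
      also have "\<dots> \<le> h \<delta>" by (intro hb order_trans[OF max.cobounded1 dl])
      finally show "ereal r < h \<delta>" .
    qed
  qed
  then show ?thesis unfolding ce_tm h_def[symmetric] by (intro tendsto_Lim) auto
qed

lemma dir2_final:
  assumes ne: "\<not> exponential_growth G S"
  shows "coarse_entropy G S = 0"
proof -
  have "eventually (\<lambda>\<delta>. Lim at_top (\<lambda>R. limsup (\<lambda>n. tm G S n R \<delta>)) = 0) at_top"
    by (rule eventually_mono[OF eventually_ge_at_top[of 1]]) (intro tendsto_Lim dir2[OF ne], auto)
  then have "((\<lambda>\<delta>. Lim at_top (\<lambda>R. limsup (\<lambda>n. tm G S n R \<delta>))) \<longlongrightarrow> 0) at_top"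
    by (rule tendsto_eventually)
  then show ?thesis unfolding ce_tm by (intro tendsto_Lim) auto
qed

end

theorem mainTheorem18:
  fixes G :: "('a, 'b) monoid_scheme" and S :: "'a set"
  assumes "group G" and "finite S" and "S \<subseteq> carrier G" and "generate G S = carrier G"
  shows "(exponential_growth G S \<longleftrightarrow> coarse_entropy G S = \<infinity>) \<and>
         (\<not> exponential_growth G S \<longrightarrow> coarse_entropy G S = 0)"
proof -
  interpret wgrp G S using assms by (simp add: wgrp_def wgrp_axioms_def)
  show ?thesis using dir1 dir2_final by force
qed

end
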